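(* Let $S$ be a specialisation independent scheduling rule, $G$ and $X$ p-goals, $\gamma$ a substitution and $\underline\tau$ a shifting such that $G\gamma\underline{\tau}+X$ is defined. Suppose there are p-SLD derivations $G\xrightarrow{S,E}Q$ (1) and $G\gamma\underline{\tau}+X\xrightarrow{S,D}R$ (2) via $S$ with $D/(G\gamma\underline{\tau})=E$. Then there exist a substitution $\sigma$ and a shifting $\underline{\rho}$ such that $R/(G\gamma\underline{\tau})=Q\sigma\underline{\rho}$; moreover, $\sigma$ is a renaming if $\gamma$ is a renaming and $D/X$ is empty.
   Context: A p-atom is a pair $a[p]$ of an atom $a$ and a rational priority $p$. A p-goal is a finite set of p-atoms with pairwise distinct priorities, regarded as a list ordered by increasing priority. Substitutions act on atoms and leave priorities unchanged. A clause is $h\leftarrow B$ with $h$ an atom and $B$ a p-goal. For p-goals with no common priority, $F+G=F\cup G$ (merging); $F|G$ denotes $F+G$ when all priorities of $F$ are smaller than those of $G$. A shifting $\underline{\pi}$ is a strictly increasing bijection $\mathbb{Q}\to\mathbb{Q}$ acting on priorities ($G\underline\pi$). Priority derivation step: for a p-goal $a|F$ ($a$ of least priority), clause $c=(h\leftarrow B)$, renaming $\xi$ with $var(a|F)\cap var(c\xi)=\emptyset$, idempotent relevant mgu $\theta$ of $a$ and $h\xi$, and shifting $\underline{\pi}$ with $F$, $B\xi\underline{\pi}$ sharing no priority: $a|F\xrightarrow{c\xi,\theta}(F+B\xi\underline{\pi})\theta$. A p-SLD derivation is a sequence of such steps with each renamed clause $c_j\xi_j$ variable-disjoint from the initial goal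 and all earlier renamed clauses; its template is the sequence of applied clauses. Specialisation/lowering: for $c=(h\leftarrow B)$, a step $a\lambda\underline{\sigma}|(K\lambda\underline{\sigma}+X)\xrightarrow{c}(X+K\lambda\underline{\sigma}+B\xi''\underline{\theta}'')\alpha''$ is a lowering by $X$ of a step $a|K\xrightarrow{c}(K+B\xi'\underline{\theta}')\alpha'$ ($\lambda$ a substitution, $\underline\sigma$ a shifting); it is a congruent lowering by $X$ if some shifting $\underline{\rho}$ has $K\underline{\rho}=K\underline{\sigma}$ and $B\underline{\theta}'\underline{\rho}=B\underline{\theta}''$. Steps are (congruent) lowerings of each other if each is a (congruent) lowering of the other. A set $S$ of steps is complete if (i) whenever some step $G\xrightarrow{c}\cdot$ exists, some step $G\xrightarrow{c}\cdot$ lies in $S$, and (ii) $S$ contains every step that is a congruent lowering of each other with a step of $S$. $S$ is specialisation independent if whenever $Ds_1,Ds_2\in S$ and $Ds_2$ is a lowering of $Ds_1$ by $X$, $Ds_2$ is a congruent lowering of $Ds_1$ by $X$. A specialisation independent scheduling rule is a complete specialisation independent set of steps. $G\xrightarrow{S,M}R$ denotes a p-SLD derivation with template $M$ all of whose steps lie in $S$. Sub-resolvents and sub-templates: for a step $a|(F+G)\xrightarrow{c}Q=((F+G)+B\xi\underline{\pi})\alpha$, set $Q/a=B\xi\underline{\pi}\alpha$, $Q/F=F\alpha$, $Q/(a|F)=Q/a+Q/F$, $c/a=c$, $c/F=$ empty, $c/(a|F)=c$. For a derivation $F+G\xrightarrow{c}Q\xrightarrow{K}R$, recursively $R/F=R/(Q/F)$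 and $(c|K)/F=(c/F)|(K/(Q/F))$ (for the empty derivation, $R/F=F$ and the sub-template is empty). Thus $R/F$ is the set of p-atoms of $R$ descending from $F$ and $D/F$ is the subsequence of the template $D$ of clauses applied to p-atoms descending from $F$. *)

theory Defs
  imports Complex_Main
begin

datatype ('f,'v) trm = Var 'v | Fn 'f "('f,'v) trm list"

datatype ('f,'v) atom = Atom 'f "('f,'v) trm list"

type_synonym ('f,'v) subst = "'v \<Rightarrow> ('f,'v) trm"

fun subst_t :: "('f,'v) subst \<Rightarrow> ('f,'v) trm \<Rightarrow> ('f,'v) trm" where
  "subst_t \<sigma> (Var x) = \<sigma> x"
| "subst_t \<sigma> (Fn f ts) = Fn f (map (subst_t \<sigma>) ts)"

fun subst_a :: "('f,'v) subst \<Rightarrow> ('f,'v) atom \<Rightarrow> ('f,'v) atom" where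
  "subst_a \<sigma> (Atom p ts) = Atom p (map (subst_t \<sigma>) ts)"

fun vars_t :: "('f,'v) trm \<Rightarrow> 'v set" where
  "vars_t (Var x) = {x}"
| "vars_t (Fn f ts) = \<Union> (set (map vars_t ts))"

fun vars_a :: "('f,'v) atom \<Rightarrow> 'v set" where
  "vars_a (Atom p ts) = \<Union> (set (map vars_t ts))"

text \<open>Composition: first \<sigma>, then \<theta> (so that t(\<sigma>\<theta>) = (t\<sigma>)\<theta>).\<close>
definition scomp :: "('f,'v) subst \<Rightarrow> ('f,'v) subst \<Rightarrow> ('f,'v) subst" where
  "scomp \<sigma> \<theta> = (\<lambda>x. subst_t \<theta> (\<sigma> x))"

definition sdom :: "('f,'v) subst \<Rightarrow> 'v set" where
  "sdom \<sigma> = {x. \<sigma> x \<noteq> Var x}"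

definition svran :: "('f,'v) subst \<Rightarrow> 'v set" where
  "svran \<sigma> = (\<Union>x\<in>sdom \<sigma>. vars_t (\<sigma> x))"

definition renaming :: "('f,'v) subst \<Rightarrow> bool" where
  "renaming \<sigma> \<longleftrightarrow> (\<exists>f. bij f \<and> \<sigma> = (\<lambda>x. Var (f x)))"

definition unifier :: "('f,'v) subst \<Rightarrow> ('f,'v) atom \<Rightarrow> ('f,'v) atom \<Rightarrow> bool" where
  "unifier \<theta> a b \<longleftrightarrow> subst_a \<theta> a = subst_a \<theta> b"

definition is_mgu :: "('f,'v) subst \<Rightarrow> ('f,'v) atom \<Rightarrow> ('f,'v) atom \<Rightarrow> bool" where
  "is_mgu \<theta> a b \<longleftrightarrow> unifier \<theta> a b \<and>
     (\<forall>u. unifier u a b \<longrightarrow> (\<exists>\<delta>. u = scomp \<theta> \<delta>))"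

definition idempotent :: "('f,'v) subst \<Rightarrow> bool" where
  "idempotent \<theta> \<longleftrightarrow> scomp \<theta> \<theta> = \<theta>"

definition relevant_mgu :: "('f,'v) subst \<Rightarrow> ('f,'v) atom \<Rightarrow> ('f,'v) atom \<Rightarrow> bool" where
  "relevant_mgu \<theta> a b \<longleftrightarrow> is_mgu \<theta> a b \<and> sdom \<theta> \<union> svran \<theta> \<subseteq> vars_a a \<union> vars_a b"

type_synonym ('f,'v) patom = "('f,'v) atom \<times> rat"
type_synonym ('f,'v) pgoal = "('f,'v) patom set"

definition prios :: "('f,'v) pgoal \<Rightarrow> rat set" where
  "prios G = snd ` G"

definition pgoal :: "('f,'v) pgoal \<Rightarrow> bool" where
  "pgoal G \<longleftrightarrow> finite G \<and> inj_on snd G"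

definition gsubst :: "('f,'v) pgoal \<Rightarrow> ('f,'v) subst \<Rightarrow> ('f,'v) pgoal" (infixl "\<cdot>\<^sub>s" 70) where
  "G \<cdot>\<^sub>s \<sigma> = (\<lambda>(a,p). (subst_a \<sigma> a, p)) ` G"

definition gshift :: "('f,'v) pgoal \<Rightarrow> (rat \<Rightarrow> rat) \<Rightarrow> ('f,'v) pgoal" (infixl "\<cdot>\<^sub>p" 70) where
  "G \<cdot>\<^sub>p \<pi> = (\<lambda>(a,p). (a, \<pi> p)) ` G"

definition shifting :: "(rat \<Rightarrow> rat) \<Rightarrow> bool" where
  "shifting \<pi> \<longleftrightarrow> strict_mono \<pi> \<and> bij \<pi>"

definition vars_g :: "('f,'v) pgoal \<Rightarrow> 'v set" where
  "vars_g G = (\<Union>x\<in>G. vars_a (fst x))"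

definition sel :: "('f,'v) pgoal \<Rightarrow> ('f,'v) patom" where
  "sel G = (THE x. x \<in> G \<and> (\<forall>y\<in>G. y \<noteq> x \<longrightarrow> snd x < snd y))"

text \<open>A clause h \<leftarrow> B: head atom and body p-goal.\<close>
type_synonym ('f,'v) clause = "('f,'v) atom \<times> ('f,'v) pgoal"

definition csubst :: "('f,'v) clause \<Rightarrow> ('f,'v) subst \<Rightarrow> ('f,'v) clause" where
  "csubst c \<xi> = (subst_a \<xi> (fst c), snd c \<cdot>\<^sub>s \<xi>)"

definition vars_c :: "('f,'v) clause \<Rightarrow> 'v set" where
  "vars_c c = vars_a (fst c) \<union> vars_g (snd c)"

text \<open>A step  G --(c\<xi>,\<theta>)--> (F + B\<xi>\<pi>)\<theta>  is recorded by its data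
  (goal G, clause c, renaming \<xi>, mgu \<theta>, shifting \<pi>).\<close>
record ('f,'v) step =
  sgoal :: "('f,'v) pgoal"
  sclause :: "('f,'v) clause"
  sren :: "('f,'v) subst"
  smgu :: "('f,'v) subst"
  sshift :: "rat \<Rightarrow> rat"

definition valid_step :: "('f,'v) step \<Rightarrow> bool" where
  "valid_step s \<longleftrightarrow>
     (let G = sgoal s; c = sclause s; \<xi> = sren s; \<theta> = smgu s; \<pi> = sshift s in
      pgoal G \<and> G \<noteq> {} \<and> pgoal (snd c) \<and> renaming \<xi> \<and>
      vars_g G \<inter> vars_c (csubst c \<xi>) = {} \<and>
      idempotent \<theta> \<and> relevant_mgu \<theta> (fst (sel G)) (subst_a \<xi> (fst c)) \<and>
      shifting \<pi> \<and> prios (G - {sel G}) \<inter> prios (snd c \<cdot>\<^sub>s \<xi> \<cdot>\<^sub>p \<pi>) = {})"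

definition result :: "('f,'v) step \<Rightarrow> ('f,'v) pgoal" where
  "result s = ((sgoal s - {sel (sgoal s)}) \<union> (snd (sclause s) \<cdot>\<^sub>s sren s \<cdot>\<^sub>p sshift s)) \<cdot>\<^sub>s smgu s"

text \<open>s2 is a lowering by X of s1: s1 = (a|K --c--> ...), s2 = (a\<lambda>\<sigma> | (K\<lambda>\<sigma> + X) --c--> ...).\<close>
definition lowering_cond ::
  "('f,'v) pgoal \<Rightarrow> ('f,'v) step \<Rightarrow> ('f,'v) step \<Rightarrow> ('f,'v) subst \<Rightarrow> (rat \<Rightarrow> rat) \<Rightarrow> bool" where
  "lowering_cond X s1 s2 lam \<sigma> \<longleftrightarrow>
     valid_step s1 \<and> valid_step s2 \<and> sclause s1 = sclause s2 \<and> shifting \<sigma> \<and>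
     prios (sgoal s1 \<cdot>\<^sub>s lam \<cdot>\<^sub>p \<sigma>) \<inter> prios X = {} \<and>
     sgoal s2 = sgoal s1 \<cdot>\<^sub>s lam \<cdot>\<^sub>p \<sigma> \<union> X \<and>
     sel (sgoal s2) = (subst_a lam (fst (sel (sgoal s1))), \<sigma> (snd (sel (sgoal s1))))"

definition lowering :: "('f,'v) pgoal \<Rightarrow> ('f,'v) step \<Rightarrow> ('f,'v) step \<Rightarrow> bool" where
  "lowering X s1 s2 \<longleftrightarrow> (\<exists>lam \<sigma>. lowering_cond X s1 s2 lam \<sigma>)"

definition cong_lowering :: "('f,'v) pgoal \<Rightarrow> ('f,'v) step \<Rightarrow> ('f,'v) step \<Rightarrow> bool" where
  "cong_lowering X s1 s2 \<longleftrightarrow> (\<exists>lam \<sigma> \<rho>. lowering_cond X s1 s2 lam \<sigma> \<and> shifting \<rho> \<and>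
     (sgoal s1 - {sel (sgoal s1)}) \<cdot>\<^sub>p \<rho> = (sgoal s1 - {sel (sgoal s1)}) \<cdot>\<^sub>p \<sigma> \<and>
     snd (sclause s1) \<cdot>\<^sub>p sshift s1 \<cdot>\<^sub>p \<rho> = snd (sclause s1) \<cdot>\<^sub>p sshift s2)"

definition cong_lowerings_each_other :: "('f,'v) step \<Rightarrow> ('f,'v) step \<Rightarrow> bool" where
  "cong_lowerings_each_other s1 s2 \<longleftrightarrow>
     (\<exists>X. cong_lowering X s1 s2) \<and> (\<exists>Y. cong_lowering Y s2 s1)"

definition complete :: "('f,'v) step set \<Rightarrow> bool" where
  "complete S \<longleftrightarrow> S \<subseteq> {s. valid_step s} \<and>
     (\<forall>G c. (\<exists>s. valid_step s \<and> sgoal s = G \<and> sclause s = c) \<longrightarrow>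
            (\<exists>s\<in>S. sgoal s = G \<and> sclause s = c)) \<and>
     (\<forall>s1\<in>S. \<forall>s2. valid_step s2 \<and> cong_lowerings_each_other s1 s2 \<longrightarrow> s2 \<in> S)"

definition spec_indep :: "('f,'v) step set \<Rightarrow> bool" where
  "spec_indep S \<longleftrightarrow> (\<forall>s1\<in>S. \<forall>s2\<in>S. \<forall>X. lowering X s1 s2 \<longrightarrow> cong_lowering X s1 s2)"

definition sis_rule :: "('f,'v) step set \<Rightarrow> bool" where
  "sis_rule S \<longleftrightarrow> complete S \<and> spec_indep S"

fun chain :: "('f,'v) pgoal \<Rightarrow> ('f,'v) step list \<Rightarrow> ('f,'v) pgoal \<Rightarrow> bool" where
  "chain G [] R \<longleftrightarrow> R = G"
| "chain G (s # ss) R \<longleftrightarrow> valid_step s \<and> sgoal s = G \<and> chain (result s) ss R"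

definition rclause :: "('f,'v) step \<Rightarrow> ('f,'v) clause" where
  "rclause s = csubst (sclause s) (sren s)"

text \<open>p-SLD derivation G --(S,M)--> R given by the step list ds.\<close>
definition pderiv :: "('f,'v) step set \<Rightarrow> ('f,'v) pgoal \<Rightarrow> ('f,'v) step list \<Rightarrow>
    ('f,'v) clause list \<Rightarrow> ('f,'v) pgoal \<Rightarrow> bool" where
  "pderiv S G ds M R \<longleftrightarrow> chain G ds R \<and> set ds \<subseteq> S \<and> map sclause ds = M \<and>
     (\<forall>i<length ds. vars_c (rclause (ds ! i)) \<inter> vars_g G = {} \<and>
        (\<forall>j<i. vars_c (rclause (ds ! i)) \<inter> vars_c (rclause (ds ! j)) = {}))"

definition step_sub :: "('f,'v) step \<Rightarrow> ('f,'v) pgoal \<Rightarrow> ('f,'v) pgoal" where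
  "step_sub s F = ((F - {sel (sgoal s)}) \<cdot>\<^sub>s smgu s) \<union>
     (if sel (sgoal s) \<in> F then snd (sclause s) \<cdot>\<^sub>s sren s \<cdot>\<^sub>p sshift s \<cdot>\<^sub>s smgu s else {})"

fun subres :: "('f,'v) step list \<Rightarrow> ('f,'v) pgoal \<Rightarrow> ('f,'v) pgoal" where
  "subres [] F = F"
| "subres (s # ss) F = subres ss (step_sub s F)"

fun subtempl :: "('f,'v) step list \<Rightarrow> ('f,'v) pgoal \<Rightarrow> ('f,'v) clause list" where
  "subtempl [] F = []"
| "subtempl (s # ss) F = (if sel (sgoal s) \<in> F then [sclause s] else []) @ subtempl ss (step_sub s F)"

end

theory Submission
  imports Defs
begin


lemma subst_t_comp: "subst_t \<theta> (subst_t \<sigma> t) = subst_t (scomp \<sigma> \<theta>) t"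
  by (induction t) (auto simp: scomp_def)

lemma subst_a_comp: "subst_a \<theta> (subst_a \<sigma> a) = subst_a (scomp \<sigma> \<theta>) a"
  by (cases a) (auto simp: subst_t_comp)

lemma subst_t_cong: "(\<And>x. x \<in> vars_t t \<Longrightarrow> \<sigma> x = \<tau> x) \<Longrightarrow> subst_t \<sigma> t = subst_t \<tau> t"
  by (induction t) auto

lemma subst_a_cong: "(\<And>x. x \<in> vars_a a \<Longrightarrow> \<sigma> x = \<tau> x) \<Longrightarrow> subst_a \<sigma> a = subst_a \<tau> a"
  by (cases a) (auto intro: subst_t_cong)

lemma vars_t_subst: "vars_t (subst_t \<sigma> t) = (\<Union>x\<in>vars_t t. vars_t (\<sigma> x))"
  by (induction t) auto

lemma vars_a_subst: "vars_a (subst_a \<sigma> a) = (\<Union>x\<in>vars_a a. vars_t (\<sigma> x))"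
  by (cases a) (auto simp: vars_t_subst)

lemma subst_t_Var[simp]: "subst_t Var t = t"
  by (induction t) (auto simp: map_idI)

lemma subst_t_Var_fun[simp]: "subst_t Var = (\<lambda>t. t)"
  by (rule ext) simp

lemma subst_a_Var[simp]: "subst_a Var a = a"
  by (cases a) auto

lemma scomp_assoc: "scomp (scomp a b) c = scomp a (scomp b c)"
  by (auto simp: scomp_def subst_t_comp)

lemma scomp_Var_l[simp]: "scomp Var a = a" by (auto simp: scomp_def)
lemma scomp_Var_r[simp]: "scomp a Var = a" by (auto simp: scomp_def)

lemma gsubst_comp: "G \<cdot>\<^sub>s \<sigma> \<cdot>\<^sub>s \<theta> = G \<cdot>\<^sub>s scomp \<sigma> \<theta>"
  unfolding gsubst_def image_image by (rule image_cong) (auto simp: subst_a_comp split: prod.splits)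

lemma gshift_comp: "G \<cdot>\<^sub>p f \<cdot>\<^sub>p g = G \<cdot>\<^sub>p (g \<circ> f)"
  unfolding gshift_def image_image by (rule image_cong) (auto split: prod.splits)

lemma gsubst_gshift: "G \<cdot>\<^sub>p f \<cdot>\<^sub>s \<sigma> = G \<cdot>\<^sub>s \<sigma> \<cdot>\<^sub>p f"
  unfolding gshift_def gsubst_def image_image by (rule image_cong) (auto split: prod.splits)

lemma gsubst_union: "(A \<union> B) \<cdot>\<^sub>s \<sigma> = A \<cdot>\<^sub>s \<sigma> \<union> B \<cdot>\<^sub>s \<sigma>"
  unfolding gsubst_def by auto

lemma gshift_union: "(A \<union> B) \<cdot>\<^sub>p \<sigma> = A \<cdot>\<^sub>p \<sigma> \<union> B \<cdot>\<^sub>p \<sigma>"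
  unfolding gshift_def by auto

lemma gsubst_empty[simp]: "{} \<cdot>\<^sub>s \<sigma> = {}" unfolding gsubst_def by auto

lemma gsubst_cong: "(\<And>x. x \<in> vars_g G \<Longrightarrow> \<sigma> x = \<tau> x) \<Longrightarrow> G \<cdot>\<^sub>s \<sigma> = G \<cdot>\<^sub>s \<tau>"
  unfolding gsubst_def vars_g_def
  by (rule image_cong) (force intro!: subst_a_cong split: prod.splits)+

lemma gshift_cong: "(\<And>p. p \<in> prios G \<Longrightarrow> f p = g p) \<Longrightarrow> G \<cdot>\<^sub>p f = G \<cdot>\<^sub>p g"
  unfolding gshift_def prios_def
  by (rule image_cong) (force split: prod.splits)+

lemma prios_gsubst[simp]: "prios (G \<cdot>\<^sub>s \<sigma>) = prios G"
  unfolding prios_def gsubst_def by (force simp: image_image split: prod.splits)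

lemma prios_gshift[simp]: "prios (G \<cdot>\<^sub>p f) = f ` prios G"
  unfolding prios_def gshift_def by (force simp: image_image split: prod.splits)

lemma prios_union[simp]: "prios (A \<union> B) = prios A \<union> prios B"
  unfolding prios_def by auto

lemma vars_g_gshift[simp]: "vars_g (G \<cdot>\<^sub>p f) = vars_g G"
  unfolding vars_g_def gshift_def by (force split: prod.splits)

lemma vars_g_gsubst: "vars_g (G \<cdot>\<^sub>s \<sigma>) = (\<Union>x\<in>vars_g G. vars_t (\<sigma> x))"
  unfolding vars_g_def gsubst_def by (force split: prod.splits simp: vars_a_subst)

lemma vars_g_union[simp]: "vars_g (A \<union> B) = vars_g A \<union> vars_g B"
  unfolding vars_g_def by auto

lemma sel_prop:
  assumes "pgoal G" "G \<noteq> {}"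
  shows "sel G \<in> G \<and> (\<forall>y\<in>G. y \<noteq> sel G \<longrightarrow> snd (sel G) < snd y)"
proof -
  have fin: "finite G" and inj: "inj_on snd G" using assms unfolding pgoal_def by auto
  obtain x where x: "x \<in> G" "\<forall>y\<in>G. snd x \<le> snd y"
    using ex_min_if_finite[of "snd ` G"] fin assms(2)
    by (metis (no_types, lifting) empty_is_image finite_imageI imageE imageI le_less not_le)
  have m: "\<forall>y\<in>G. y \<noteq> x \<longrightarrow> snd x < snd y"
    using x inj by (metis inj_on_eq_iff order_le_less)
  have "sel G = x" unfolding sel_def
  proof (rule the_equality)
    show "x \<in> G \<and> (\<forall>y\<in>G. y \<noteq> x \<longrightarrow> snd x < snd y)" using x m by auto
  next
    fix z assume "z \<in> G \<and> (\<forall>y\<in>G. y \<noteq> z \<longrightarrow> snd z < snd y)"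
    then show "z = x" using x m by force
  qed
  then show ?thesis using x m by auto
qed

lemma sel_eq:
  assumes "x \<in> G" "\<forall>y\<in>G. y \<noteq> x \<longrightarrow> snd x < snd y"
  shows "sel G = x"
  unfolding sel_def
proof (rule the_equality)
  show "x \<in> G \<and> (\<forall>y\<in>G. y \<noteq> x \<longrightarrow> snd x < snd y)" using assms by auto
next
  fix z assume "z \<in> G \<and> (\<forall>y\<in>G. y \<noteq> z \<longrightarrow> snd z < snd y)"
  then show "z = x" using assms by force
qed



lemma mono_agree:
  fixes f g :: "rat \<Rightarrow> rat"
  assumes "finite P" "strict_mono f" "strict_mono g" "f ` P = g ` P" "p \<in> P"
  shows "f p = g p"
proof -
  have cnt: "card {x\<in>P. x < q} = card {y\<in>h ` P. y < h q}" if "strict_mono h" for h :: "rat \<Rightarrow> rat" and q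
  proof -
    have "h ` {x\<in>P. x < q} = {y\<in>h ` P. y < h q}"
      using that by (auto simp: strict_mono_less)
    moreover have "inj_on h {x\<in>P. x < q}" using strict_mono_imp_inj_on[OF that] by (auto simp: inj_on_def)
    ultimately show ?thesis by (metis card_image)
  qed
  obtain q where q: "q \<in> P" "f p = g q" using assms(4,5) by (metis imageE imageI)
  have c: "card {x\<in>P. x < p} = card {x\<in>P. x < q}"
    using cnt[OF assms(2), of p] cnt[OF assms(3), of q] q assms(4) by simp
  show ?thesis
  proof (cases "p = q")
    case True then show ?thesis using q by simp
  next
    case False
    then have "p < q \<or> q < p" by auto
    then show ?thesis
    proof
      assume "p < q"
      then have "{x\<in>P. x < p} \<subset> {x\<in>P. x < q}" using assms(5) by auto
      then have "card {x\<in>P. x < p} < card {x\<in>P. x < q}" using assms(1) by (intro psubset_card_mono) auto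
      then show ?thesis using c by simp
    next
      assume "q < p"
      then have "{x\<in>P. x < q} \<subset> {x\<in>P. x < p}" using q by auto
      then have "card {x\<in>P. x < q} < card {x\<in>P. x < p}" using assms(1) by (intro psubset_card_mono) auto
      then show ?thesis using c by simp
    qed
  qed
qed

lemma extend_bij:
  fixes f :: "'a \<Rightarrow> 'a"
  assumes "finite F" "inj_on f F"
  shows "\<exists>h. bij h \<and> (\<forall>x\<in>F. h x = f x)"
proof -
  define A1 where "A1 = f ` F - F"
  define B1 where "B1 = F - f ` F"
  have cF: "card (f ` F) = card F" using assms by (simp add: card_image)
  have "card A1 = card B1"
  proof -
    have "card A1 = card (f ` F) - card (f ` F \<inter> F)" unfolding A1_def
      using assms by (metis card_Diff_subset_Int finite_Int finite_imageI Diff_Int2 inf.idem Int_commute)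
    moreover have "card B1 = card F - card (F \<inter> f ` F)" unfolding B1_def
      using assms by (metis card_Diff_subset_Int finite_Int finite_imageI Diff_Int2 inf.idem)
    ultimately show ?thesis using cF by (simp add: Int_commute)
  qed
  moreover have "finite A1" "finite B1" using assms unfolding A1_def B1_def by auto
  ultimately obtain k where k: "bij_betw k A1 B1" by (metis finite_same_card_bij)
  define C where "C = UNIV - (F \<union> f ` F)"
  define h where "h x = (if x \<in> F then f x else if x \<in> A1 then k x else x)" for x
  have b1: "bij_betw h F (f ` F)"
    using assms(2) by (auto simp: bij_betw_def h_def inj_on_def)
  have b2: "bij_betw h A1 B1"
    using k by (rule bij_betw_cong[THEN iffD1, rotated]) (auto simp: h_def A1_def)
  have b3: "bij_betw h C C"
    by (auto simp: bij_betw_def h_def inj_on_def C_def A1_def image_def)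
  have "bij_betw h (F \<union> A1) (f ` F \<union> B1)"
    by (rule bij_betw_combine[OF b1 b2]) (auto simp: B1_def)
  then have "bij_betw h ((F \<union> A1) \<union> C) ((f ` F \<union> B1) \<union> C)"
    by (rule bij_betw_combine[OF _ b3]) (auto simp: B1_def C_def)
  moreover have "(F \<union> A1) \<union> C = UNIV" "(f ` F \<union> B1) \<union> C = UNIV"
    by (auto simp: A1_def B1_def C_def)
  ultimately have "bij h" by simp
  then show ?thesis by (auto simp: h_def)
qed

lemma finite_vars_t[simp]: "finite (vars_t t)"
  by (induction t) auto

lemma finite_vars_a[simp]: "finite (vars_a a)"
  by (cases a) auto

lemma subst_t_fix: "subst_t \<nu> t = t \<Longrightarrow> y \<in> vars_t t \<Longrightarrow> \<nu> y = Var y"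
proof (induction t)
  case (Var x) then show ?case by simp
next
  case (Fn f ts)
  then obtain t where t: "t \<in> set ts" "y \<in> vars_t t" by auto
  from Fn.prems(1) have "map (subst_t \<nu>) ts = map (\<lambda>x. x) ts" by simp
  then have "subst_t \<nu> t = t" using t(1) unfolding map_eq_conv by blast
  then show ?case using Fn.IH t by blast
qed



lemma relevant_vars:
  assumes "relevant_mgu \<theta> a b" "x \<in> vars_a a \<union> vars_a b"
  shows "vars_t (\<theta> x) \<subseteq> vars_a a \<union> vars_a b"
proof (cases "x \<in> sdom \<theta>")
  case True
  then have "vars_t (\<theta> x) \<subseteq> svran \<theta>" unfolding svran_def by auto
  then show ?thesis using assms unfolding relevant_mgu_def by auto
next
  case False then show ?thesis using assms(2) by (simp add: sdom_def)
qed

lemma relevant_out: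
  assumes "relevant_mgu \<theta> a b" "x \<notin> vars_a a \<union> vars_a b"
  shows "\<theta> x = Var x"
  using assms unfolding relevant_mgu_def sdom_def by auto

lemma ren_mgu:
  fixes g :: "'v \<Rightarrow> 'v" and \<theta>1 \<theta>2 :: "('f,'v) subst"
  assumes bg: "bij g"
    and r1: "relevant_mgu \<theta>1 a h"
    and r2: "relevant_mgu \<theta>2 (subst_a (\<lambda>x. Var (g x)) a) (subst_a (\<lambda>x. Var (g x)) h)"
    and fV: "finite V"
  shows "\<exists>\<delta>. renaming \<delta> \<and> (\<forall>x\<in>V. subst_t \<delta> (\<theta>1 x) = \<theta>2 (g x))"
proof -
  define w :: "('f,'v) subst" where "w = (\<lambda>x. Var (g x))"
  define v :: "('f,'v) subst" where "v = (\<lambda>x. Var (inv g x))"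
  have wv: "scomp w v = Var" unfolding w_def v_def scomp_def using bg
    by (auto simp: bij_def)
  define A where "A = vars_a a \<union> vars_a h"
  have m1: "is_mgu \<theta>1 a h" and m2: "is_mgu \<theta>2 (subst_a w a) (subst_a w h)"
    using r1 r2 unfolding relevant_mgu_def w_def by auto
  have "unifier (scomp w \<theta>2) a h"
    using m2 unfolding is_mgu_def unifier_def by (simp add: subst_a_comp[symmetric])
  then obtain \<alpha> where al: "scomp w \<theta>2 = scomp \<theta>1 \<alpha>" using m1 unfolding is_mgu_def by blast
  have "unifier (scomp v (scomp \<theta>1 w)) (subst_a w a) (subst_a w h)"
  proof -
    have "subst_a (scomp v (scomp \<theta>1 w)) (subst_a w t) = subst_a w (subst_a \<theta>1 t)" for t
      by (simp add: subst_a_comp scomp_assoc[symmetric] wv)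
    then show ?thesis using m1 unfolding is_mgu_def unifier_def by simp
  qed
  then obtain \<beta> where be: "scomp v (scomp \<theta>1 w) = scomp \<theta>2 \<beta>" using m2 unfolding is_mgu_def by blast
  define \<nu> where "\<nu> = scomp \<alpha> (scomp \<beta> v)"
  have fix1: "scomp \<theta>1 \<nu> = \<theta>1"
  proof -
    have "scomp \<theta>1 \<nu> = scomp (scomp \<theta>1 \<alpha>) (scomp \<beta> v)" by (simp add: \<nu>_def scomp_assoc)
    also have "\<dots> = scomp w (scomp (scomp \<theta>2 \<beta>) v)" by (simp add: al[symmetric] scomp_assoc)
    also have "\<dots> = scomp (scomp w v) (scomp (scomp \<theta>1 w) v)" by (simp add: be[symmetric] scomp_assoc)
    also have "\<dots> = \<theta>1" by (simp add: wv scomp_assoc)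
    finally show ?thesis .
  qed
  define W where "W = (\<Union>x\<in>A. vars_t (\<theta>1 x))"
  have WA: "W \<subseteq> A" unfolding W_def A_def using relevant_vars[OF r1] by blast
  have finA: "finite A" unfolding A_def by simp
  have finW: "finite W" unfolding W_def using finA by simp
  have nuW: "\<nu> y = Var y" if "y \<in> W" for y
  proof -
    from that obtain x where "x \<in> A" "y \<in> vars_t (\<theta>1 x)" unfolding W_def by auto
    moreover have "subst_t \<nu> (\<theta>1 x) = \<theta>1 x" using fix1 by (metis scomp_def)
    ultimately show ?thesis using subst_t_fix by metis
  qed
  define a0 where "a0 y = (case \<alpha> y of Var z \<Rightarrow> z | Fn _ _ \<Rightarrow> y)" for y
  have alW: "\<alpha> y = Var (a0 y)" if "y \<in> W" for y
  proof (cases "\<alpha> y")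
    case (Var z) then show ?thesis by (simp add: a0_def)
  next
    case (Fn f ts)
    have "\<nu> y = subst_t (scomp \<beta> v) (\<alpha> y)" by (simp add: \<nu>_def scomp_def)
    then have "\<nu> y = Fn f (map (subst_t (scomp \<beta> v)) ts)" using Fn by simp
    then show ?thesis using nuW[OF that] by simp
  qed
  have inja0: "inj_on a0 W"
  proof (rule inj_onI)
    fix y y' assume "y \<in> W" "y' \<in> W" "a0 y = a0 y'"
    then have "\<alpha> y = \<alpha> y'" using alW by metis
    then have "\<nu> y = \<nu> y'" by (simp add: \<nu>_def scomp_def)
    then show "y = y'" using nuW \<open>y \<in> W\<close> \<open>y' \<in> W\<close> by simp
  qed
  have A': "vars_a (subst_a w a) \<union> vars_a (subst_a w h) = g ` A"
    unfolding A_def w_def by (auto simp: vars_a_subst)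
  have a0img: "a0 y \<in> g ` A" if "y \<in> W" for y
  proof -
    from that obtain x where x: "x \<in> A" "y \<in> vars_t (\<theta>1 x)" unfolding W_def by auto
    have "\<theta>2 (g x) = subst_t \<alpha> (\<theta>1 x)" using al by (metis scomp_def subst_t.simps(1) w_def)
    then have "vars_t (\<alpha> y) \<subseteq> vars_t (\<theta>2 (g x))" using x(2) by (auto simp: vars_t_subst)
    moreover have "vars_t (\<theta>2 (g x)) \<subseteq> g ` A"
      using relevant_vars[OF r2[folded w_def], of "g x"] A' x(1) by auto
    ultimately show ?thesis using alW[OF that] by (metis insert_subset subset_trans vars_t.simps(1))
  qed
  define m where "m y = (if y \<in> W then a0 y else g y)" for y
  define D where "D = W \<union> (V - A)"
  have injm: "inj_on m D"
  proof (rule inj_onI)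
    fix y y' assume yD: "y \<in> D" "y' \<in> D" and e: "m y = m y'"
    have ginj: "inj g" using bg by (simp add: bij_def)
    show "y = y'"
    proof (cases "y \<in> W"; cases "y' \<in> W")
      assume "y \<in> W" "y' \<in> W" then show ?thesis using e inja0 by (auto simp: m_def inj_on_def)
    next
      assume "y \<in> W" "y' \<notin> W"
      then have "y' \<notin> A" using yD D_def by auto
      then have "g y' \<notin> g ` A" using ginj by (auto simp: inj_def)
      then show ?thesis using e a0img \<open>y \<in> W\<close> \<open>y' \<notin> W\<close> by (metis m_def)
    next
      assume "y \<notin> W" "y' \<in> W"
      then have "y \<notin> A" using yD D_def by auto
      then have "g y \<notin> g ` A" using ginj by (auto simp: inj_def)
      then show ?thesis using e a0img \<open>y \<notin> W\<close> \<open>y' \<in> W\<close> by (metis m_def)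
    next
      assume "y \<notin> W" "y' \<notin> W" then show ?thesis using e ginj by (auto simp: m_def inj_def)
    qed
  qed
  have finD: "finite D" unfolding D_def using finW fV by simp
  obtain \<eta> where eta: "bij \<eta>" "\<forall>y\<in>D. \<eta> y = m y" using extend_bij[OF finD injm] by blast
  define \<delta> :: "('f,'v) subst" where "\<delta> = (\<lambda>x. Var (\<eta> x))"
  have ren: "renaming \<delta>" unfolding renaming_def \<delta>_def using eta(1) by blast
  have "subst_t \<delta> (\<theta>1 x) = \<theta>2 (g x)" if "x \<in> V" for x
  proof (cases "x \<in> A")
    case True
    have "subst_t \<delta> (\<theta>1 x) = subst_t \<alpha> (\<theta>1 x)"
    proof (rule subst_t_cong)
      fix y assume "y \<in> vars_t (\<theta>1 x)"
      then have "y \<in> W" using True unfolding W_def by auto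
      then show "\<delta> y = \<alpha> y" using eta(2) alW by (simp add: \<delta>_def D_def m_def)
    qed
    also have "\<dots> = \<theta>2 (g x)" using al by (metis scomp_def subst_t.simps(1) w_def)
    finally show ?thesis .
  next
    case False
    have "\<theta>1 x = Var x" using relevant_out[OF r1] False A_def by auto
    moreover have "x \<notin> W" using False WA by auto
    moreover have "g x \<notin> g ` A" using False bg by (auto simp: bij_def inj_def)
    then have "\<theta>2 (g x) = Var (g x)" using relevant_out[OF r2[folded w_def]] A' by auto
    ultimately show ?thesis using eta(2) that False by (simp add: \<delta>_def D_def m_def)
  qed
  then show ?thesis using ren by blast
qed



lemma vars_g_mono: "A \<subseteq> B \<Longrightarrow> vars_g A \<subseteq> vars_g B"
  unfolding vars_g_def by auto

lemma gmap: "G \<cdot>\<^sub>s \<sigma> \<cdot>\<^sub>p \<rho> = (\<lambda>(a,p). (subst_a \<sigma> a, \<rho> p)) ` G"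
  unfolding gsubst_def gshift_def image_image by (rule image_cong) (auto split: prod.splits)

lemma finite_vars_g: "finite G \<Longrightarrow> finite (vars_g G)"
  unfolding vars_g_def by auto

lemma ren_vars_a: "vars_a (subst_a (\<lambda>x. Var (f x)) a) = f ` vars_a a"
  by (auto simp: vars_a_subst)

lemma ren_vars_c: "vars_c (csubst c (\<lambda>x. Var (f x))) = f ` vars_c c"
  unfolding vars_c_def csubst_def by (auto simp: vars_a_subst vars_g_gsubst)

lemma union_cancel:
  assumes "A \<union> Y = A' \<union> Y" "prios A \<inter> prios Y = {}" "prios A' \<inter> prios Y = {}"
  shows "A = A'"
proof -
  have "x \<notin> Y" if "x \<in> A" for x using that assms(2) unfolding prios_def by auto
  moreover have "x \<notin> Y" if "x \<in> A'" for x using that assms(3) unfolding prios_def by auto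
  ultimately show ?thesis using assms(1) by blast
qed

lemma valid_stepD:
  assumes "valid_step s"
  shows "pgoal (sgoal s)" "sgoal s \<noteq> {}" "pgoal (snd (sclause s))" "renaming (sren s)"
    "vars_g (sgoal s) \<inter> vars_c (csubst (sclause s) (sren s)) = {}"
    "idempotent (smgu s)" "relevant_mgu (smgu s) (fst (sel (sgoal s))) (subst_a (sren s) (fst (sclause s)))"
    "shifting (sshift s)"
    "prios (sgoal s - {sel (sgoal s)}) \<inter> prios (snd (sclause s) \<cdot>\<^sub>s sren s \<cdot>\<^sub>p sshift s) = {}"
  using assms unfolding valid_step_def Let_def by auto



lemma step_lemma:
  fixes S :: "('f,'v) step set" and \<sigma> :: "('f,'v) subst"
  assumes sis: "sis_rule S" and s1S: "s1 \<in> S" and s2S: "s2 \<in> S"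
    and cl: "sclause s1 = sclause s2" and sh: "shifting \<rho>"
    and g2: "sgoal s2 = sgoal s1 \<cdot>\<^sub>s \<sigma> \<cdot>\<^sub>p \<rho> \<union> Y"
    and disj: "prios (sgoal s1 \<cdot>\<^sub>s \<sigma> \<cdot>\<^sub>p \<rho>) \<inter> prios Y = {}"
    and zin: "sel (sgoal s2) \<in> sgoal s1 \<cdot>\<^sub>s \<sigma> \<cdot>\<^sub>p \<rho>"
  shows "\<exists>\<delta> \<rho>'. shifting \<rho>' \<and> step_sub s2 (sgoal s1 \<cdot>\<^sub>s \<sigma> \<cdot>\<^sub>p \<rho>) = result s1 \<cdot>\<^sub>s \<delta> \<cdot>\<^sub>p \<rho>' \<and>
     (renaming \<sigma> \<longrightarrow> renaming \<delta>)"
proof -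
  have v1: "valid_step s1" and v2: "valid_step s2"
    using sis s1S s2S unfolding sis_rule_def complete_def by auto
  define G1 where "G1 = sgoal s1"
  define F where "F = G1 \<cdot>\<^sub>s \<sigma> \<cdot>\<^sub>p \<rho>"
  obtain hd B where c1: "sclause s1 = (hd, B)" by (cases "sclause s1")
  have c2: "sclause s2 = (hd, B)" using c1 cl by simp
  define \<xi>1 where "\<xi>1 = sren s1"
  define \<xi>2 where "\<xi>2 = sren s2"
  define \<theta>1 where "\<theta>1 = smgu s1"
  define \<theta>2 where "\<theta>2 = smgu s2"
  define \<pi>1 where "\<pi>1 = sshift s1"
  define \<pi>2 where "\<pi>2 = sshift s2"
  note d1 = valid_stepD[OF v1, folded G1_def, unfolded c1 \<xi>1_def[symmetric] \<theta>1_def[symmetric] \<pi>1_def[symmetric]]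
  note d2 = valid_stepD[OF v2, unfolded c2 \<xi>2_def[symmetric] \<theta>2_def[symmetric] \<pi>2_def[symmetric]]
  have fG1: "finite G1" and iG1: "inj_on snd G1" using d1(1) unfolding pgoal_def by auto
  obtain a p where ap: "sel G1 = (a, p)" by (cases "sel G1")
  have selG1: "sel G1 \<in> G1" using sel_prop[OF d1(1,2)] by auto
  have smr: "strict_mono \<rho>" using sh unfolding shifting_def by auto
  define \<phi> where "\<phi> = (\<lambda>(a,p). (subst_a \<sigma> a, \<rho> p))"
  have Fimg: "F = \<phi> ` G1" unfolding F_def \<phi>_def by (rule gmap)
  have injphi: "inj_on \<phi> G1"
  proof (rule inj_onI)
    fix x y assume "x \<in> G1" "y \<in> G1" "\<phi> x = \<phi> y"
    then have "\<rho> (snd x) = \<rho> (snd y)" unfolding \<phi>_def by (auto split: prod.splits)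
    then have "snd x = snd y" using strict_mono_eq[OF smr] by simp
    then show "x = y" using iG1 \<open>x \<in> G1\<close> \<open>y \<in> G1\<close> by (auto simp: inj_on_def)
  qed
  have sel2: "sel (sgoal s2) = \<phi> (sel G1)"
  proof -
    have sp2: "\<forall>y\<in>sgoal s2. y \<noteq> sel (sgoal s2) \<longrightarrow> snd (sel (sgoal s2)) < snd y"
      using sel_prop[OF d2(1,2)] by auto
    obtain b q where bq: "(b,q) \<in> G1" "sel (sgoal s2) = \<phi> (b,q)"
      using zin Fimg F_def G1_def by auto
    have "sel G1 = (b,q)"
    proof (rule sel_eq)
      show "(b,q) \<in> G1" by fact
      show "\<forall>y\<in>G1. y \<noteq> (b, q) \<longrightarrow> snd (b, q) < snd y"
      proof (intro ballI impI)
        fix y assume y: "y \<in> G1" "y \<noteq> (b,q)"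
        have ne: "snd y \<noteq> q" using iG1 y bq(1) by (metis inj_on_contraD snd_conv)
        show "snd (b,q) < snd y"
        proof (rule ccontr)
          assume "\<not> snd (b,q) < snd y"
          then have lt: "snd y < q" using ne by auto
          have "\<phi> y \<in> sgoal s2" using y(1) g2 Fimg F_def G1_def by auto
          moreover have "\<phi> y \<noteq> sel (sgoal s2)" using bq lt smr unfolding \<phi>_def
            by (auto split: prod.splits simp: strict_mono_eq)
          ultimately have "snd (sel (sgoal s2)) < snd (\<phi> y)" using sp2 by auto
          then have "\<rho> q < \<rho> (snd y)" using bq unfolding \<phi>_def by (auto split: prod.splits)
          then show False using lt smr by (simp add: strict_mono_less)
        qed
      qed
    qed
    then show ?thesis using bq by simp
  qed
  have lc: "lowering_cond Y s1 s2 \<sigma> \<rho>"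
    unfolding lowering_cond_def using v1 v2 cl sh disj g2 sel2 ap
    by (simp add: G1_def \<phi>_def)
  then have "cong_lowering Y s1 s2"
    using sis s1S s2S unfolding sis_rule_def spec_indep_def lowering_def by blast
  then obtain lam' \<sigma>' \<rho>'' where lc': "lowering_cond Y s1 s2 lam' \<sigma>'" and shr: "shifting \<rho>''"
    and kc: "(G1 - {sel G1}) \<cdot>\<^sub>p \<rho>'' = (G1 - {sel G1}) \<cdot>\<^sub>p \<sigma>'"
    and bc: "B \<cdot>\<^sub>p \<pi>1 \<cdot>\<^sub>p \<rho>'' = B \<cdot>\<^sub>p \<pi>2"
    unfolding cong_lowering_def G1_def \<pi>1_def \<pi>2_def using c1 by auto
  define K where "K = G1 - {sel G1}"
  have "G1 \<cdot>\<^sub>s lam' \<cdot>\<^sub>p \<sigma>' = F"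
    using lc' g2 disj unfolding lowering_cond_def F_def G1_def
    by (metis union_cancel)
  then have "\<sigma>' ` prios G1 = \<rho> ` prios G1" unfolding F_def
    by (metis prios_gshift prios_gsubst)
  moreover have "strict_mono \<sigma>'" using lc' unfolding lowering_cond_def shifting_def by auto
  moreover have "finite (prios G1)" using fG1 unfolding prios_def by simp
  ultimately have agree: "\<forall>q\<in>prios G1. \<sigma>' q = \<rho> q" using smr mono_agree by metis
  have kshift: "K \<cdot>\<^sub>p \<rho>'' = K \<cdot>\<^sub>p \<rho>"
  proof -
    have "K \<cdot>\<^sub>p \<sigma>' = K \<cdot>\<^sub>p \<rho>"
      by (rule gshift_cong) (use agree in \<open>auto simp: K_def prios_def\<close>)
    then show ?thesis using kc K_def by simp
  qed
  obtain f1 where f1: "bij f1" "\<xi>1 = (\<lambda>x. Var (f1 x))" using d1(4) unfolding renaming_def by blast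
  obtain f2 where f2: "bij f2" "\<xi>2 = (\<lambda>x. Var (f2 x))" using d2(4) unfolding renaming_def by blast
  define VG where "VG = vars_g G1"
  define Vc where "Vc = vars_c (csubst (hd,B) \<xi>1)"
  have VcE: "Vc = f1 ` vars_c (hd,B)" unfolding Vc_def f1(2) by (rule ren_vars_c)
  have Vc2: "vars_c (csubst (hd,B) \<xi>2) = f2 ` vars_c (hd,B)" unfolding f2(2) by (rule ren_vars_c)
  have dGc: "VG \<inter> Vc = {}" using d1(5) unfolding VG_def Vc_def .
  define u where "u x = (if x \<in> Vc then \<xi>2 (inv f1 x) else \<sigma> x)" for x
  have uG: "u x = \<sigma> x" if "x \<in> VG" for x using that dGc unfolding u_def by auto
  have uc: "u (f1 y) = \<xi>2 y" if "y \<in> vars_c (hd,B)" for y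
    using that f1(1) unfolding u_def VcE by (simp add: bij_def)
  have hd_u: "subst_a u (subst_a \<xi>1 hd) = subst_a \<xi>2 hd"
    unfolding subst_a_comp by (rule subst_a_cong) (simp add: scomp_def f1(2) uc vars_c_def)
  have B_u: "B \<cdot>\<^sub>s \<xi>1 \<cdot>\<^sub>s u = B \<cdot>\<^sub>s \<xi>2"
    unfolding gsubst_comp by (rule gsubst_cong) (simp add: scomp_def f1(2) uc vars_c_def)
  have aG: "vars_a a \<subseteq> VG" using selG1 ap unfolding VG_def vars_g_def by force
  have a_u: "subst_a u a = subst_a \<sigma> a" by (rule subst_a_cong) (use aG uG in auto)
  have r1: "relevant_mgu \<theta>1 a (subst_a \<xi>1 hd)" using d1(7) ap by simp
  have r2: "relevant_mgu \<theta>2 (subst_a \<sigma> a) (subst_a \<xi>2 hd)" using d2(7) sel2 ap by (simp add: \<phi>_def)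
  have finVG: "finite VG" unfolding VG_def using fG1 by (rule finite_vars_g)
  have finVc: "finite Vc" unfolding VcE vars_c_def using d2(3) c2
    by (simp add: pgoal_def finite_vars_g)
  obtain \<delta> where dprop: "\<forall>x\<in>VG \<union> Vc. subst_t \<delta> (\<theta>1 x) = subst_t \<theta>2 (u x)"
    and dren: "renaming \<sigma> \<longrightarrow> renaming \<delta>"
  proof (cases "renaming \<sigma>")
    case True
    then obtain g\<sigma> where gs: "bij g\<sigma>" "\<sigma> = (\<lambda>x. Var (g\<sigma> x))" unfolding renaming_def by blast
    define mm where "mm x = (if x \<in> Vc then f2 (inv f1 x) else g\<sigma> x)" for x
    have umm: "u x = Var (mm x)" for x unfolding u_def mm_def f2(2) gs(2) by simp
    have VGs2: "g\<sigma> ` VG \<subseteq> vars_g (sgoal s2)"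
    proof -
      have "vars_g F = g\<sigma> ` VG" unfolding F_def VG_def gs(2) by (auto simp: vars_g_gsubst)
      then show ?thesis using g2 F_def G1_def by auto
    qed
    have injmm: "inj_on mm (VG \<union> Vc)"
    proof (rule inj_onI)
      fix x y assume xy: "x \<in> VG \<union> Vc" "y \<in> VG \<union> Vc" "mm x = mm y"
      have i1: "inj (inv f1)" using f1(1) by (simp add: bij_imp_bij_inv bij_is_inj)
      have i2: "inj f2" "inj g\<sigma>" using f2(1) gs(1) by (auto simp: bij_def)
      have cross: "g\<sigma> x' \<noteq> f2 (inv f1 y')" if "x' \<in> VG" "y' \<in> Vc" for x' y'
      proof -
        have "g\<sigma> x' \<in> vars_g (sgoal s2)" using VGs2 that(1) by auto
        moreover have "inv f1 y' \<in> vars_c (hd,B)" using that(2) f1(1) unfolding VcE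
          by (auto simp: bij_def)
        then have "f2 (inv f1 y') \<in> vars_c (csubst (hd,B) \<xi>2)" unfolding Vc2 by auto
        ultimately show ?thesis using d2(5) by auto
      qed
      show "x = y"
      proof (cases "x \<in> Vc"; cases "y \<in> Vc")
        assume "x \<in> Vc" "y \<in> Vc"
        then show ?thesis using xy(3) i1 i2(1) unfolding mm_def by (simp add: inj_eq)
      next
        assume "x \<in> Vc" "y \<notin> Vc"
        then have "y \<in> VG" using xy(2) by auto
        then show ?thesis using xy(3) cross \<open>x \<in> Vc\<close> \<open>y \<notin> Vc\<close> unfolding mm_def by metis
      next
        assume "x \<notin> Vc" "y \<in> Vc"
        then have "x \<in> VG" using xy(1) by auto
        then show ?thesis using xy(3) cross \<open>x \<notin> Vc\<close> \<open>y \<in> Vc\<close> unfolding mm_def by metis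
      next
        assume "x \<notin> Vc" "y \<notin> Vc"
        then show ?thesis using xy(3) i2(2) unfolding mm_def by (simp add: inj_eq)
      qed
    qed
    have finV: "finite (VG \<union> Vc)" using finVG finVc by simp
    obtain gb where gb: "bij gb" "\<forall>x\<in>VG \<union> Vc. gb x = mm x" using extend_bij[OF finV injmm] by blast
    have wa: "subst_a (\<lambda>x. Var (gb x)) a = subst_a \<sigma> a"
    proof (rule subst_a_cong)
      fix x assume "x \<in> vars_a a"
      then have "x \<in> VG" "x \<notin> Vc" using aG dGc by auto
      then show "Var (gb x) = \<sigma> x" using gb(2) by (simp add: mm_def gs(2))
    qed
    have whd: "subst_a (\<lambda>x. Var (gb x)) (subst_a \<xi>1 hd) = subst_a \<xi>2 hd"
    proof -
      have "subst_a (\<lambda>x. Var (gb x)) (subst_a \<xi>1 hd) = subst_a u (subst_a \<xi>1 hd)"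
      proof (rule subst_a_cong)
        fix x assume "x \<in> vars_a (subst_a \<xi>1 hd)"
        then have "x \<in> Vc" unfolding Vc_def vars_c_def csubst_def by simp
        then show "Var (gb x) = u x" using gb(2) umm by simp
      qed
      then show ?thesis using hd_u by simp
    qed
    have "relevant_mgu \<theta>2 (subst_a (\<lambda>x. Var (gb x)) a) (subst_a (\<lambda>x. Var (gb x)) (subst_a \<xi>1 hd))"
      using r2 wa whd by simp
    from ren_mgu[OF gb(1) r1 this finV] obtain \<delta> where
      "renaming \<delta>" "\<forall>x\<in>VG \<union> Vc. subst_t \<delta> (\<theta>1 x) = \<theta>2 (gb x)" by blast
    moreover have "\<theta>2 (gb x) = subst_t \<theta>2 (u x)" if "x \<in> VG \<union> Vc" for x
      using gb(2) that umm by simp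
    ultimately show ?thesis using that by auto
  next
    case False
    have "unifier (scomp u \<theta>2) a (subst_a \<xi>1 hd)"
      using r2 unfolding unifier_def relevant_mgu_def is_mgu_def
      by (simp add: subst_a_comp[symmetric] a_u hd_u)
    then obtain \<delta> where "scomp u \<theta>2 = scomp \<theta>1 \<delta>"
      using r1 unfolding relevant_mgu_def is_mgu_def by blast
    then have "\<forall>x. subst_t \<delta> (\<theta>1 x) = subst_t \<theta>2 (u x)" by (metis scomp_def)
    then show ?thesis using that False by auto
  qed
  have KF: "F - {sel (sgoal s2)} = K \<cdot>\<^sub>s \<sigma> \<cdot>\<^sub>p \<rho>"
  proof -
    have "F - {sel (sgoal s2)} = \<phi> ` G1 - \<phi> ` {sel G1}" using Fimg sel2 by simp
    also have "\<dots> = \<phi> ` K" unfolding K_def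
      by (rule inj_on_image_set_diff[symmetric, OF injphi]) (use selG1 in auto)
    also have "\<dots> = K \<cdot>\<^sub>s \<sigma> \<cdot>\<^sub>p \<rho>" unfolding \<phi>_def by (rule gmap[symmetric])
    finally show ?thesis .
  qed
  have ss: "step_sub s2 F = K \<cdot>\<^sub>s \<sigma> \<cdot>\<^sub>p \<rho> \<cdot>\<^sub>s \<theta>2 \<union> B \<cdot>\<^sub>s \<xi>2 \<cdot>\<^sub>p \<pi>2 \<cdot>\<^sub>s \<theta>2"
    unfolding step_sub_def using zin KF c2 unfolding F_def G1_def \<theta>2_def \<xi>2_def \<pi>2_def by simp
  have rs: "result s1 = (K \<union> B \<cdot>\<^sub>s \<xi>1 \<cdot>\<^sub>p \<pi>1) \<cdot>\<^sub>s \<theta>1"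
    unfolding result_def K_def G1_def c1 \<theta>1_def \<xi>1_def \<pi>1_def by simp
  have dK: "K \<cdot>\<^sub>s \<theta>1 \<cdot>\<^sub>s \<delta> = K \<cdot>\<^sub>s \<sigma> \<cdot>\<^sub>s \<theta>2"
  proof -
    have KV: "vars_g K \<subseteq> VG" unfolding K_def VG_def by (rule vars_g_mono) auto
    have "K \<cdot>\<^sub>s \<theta>1 \<cdot>\<^sub>s \<delta> = K \<cdot>\<^sub>s scomp \<theta>1 \<delta>" by (rule gsubst_comp)
    also have "\<dots> = K \<cdot>\<^sub>s scomp u \<theta>2"
      by (rule gsubst_cong) (use KV dprop in \<open>auto simp: scomp_def\<close>)
    also have "\<dots> = K \<cdot>\<^sub>s u \<cdot>\<^sub>s \<theta>2" by (rule gsubst_comp[symmetric])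
    also have "K \<cdot>\<^sub>s u = K \<cdot>\<^sub>s \<sigma>" by (rule gsubst_cong) (use KV uG in auto)
    finally show ?thesis .
  qed
  have p1: "K \<cdot>\<^sub>s \<theta>1 \<cdot>\<^sub>s \<delta> \<cdot>\<^sub>p \<rho>'' = K \<cdot>\<^sub>s \<sigma> \<cdot>\<^sub>p \<rho> \<cdot>\<^sub>s \<theta>2"
  proof -
    have "K \<cdot>\<^sub>p \<rho>'' \<cdot>\<^sub>s \<sigma> \<cdot>\<^sub>s \<theta>2 = K \<cdot>\<^sub>p \<rho> \<cdot>\<^sub>s \<sigma> \<cdot>\<^sub>s \<theta>2" using kshift by simp
    then show ?thesis using dK by (simp only: gsubst_gshift)
  qed
  have dB: "B \<cdot>\<^sub>p \<pi>2 \<cdot>\<^sub>s \<xi>1 \<cdot>\<^sub>s \<theta>1 \<cdot>\<^sub>s \<delta> = B \<cdot>\<^sub>p \<pi>2 \<cdot>\<^sub>s \<xi>2 \<cdot>\<^sub>s \<theta>2"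
  proof -
    have BV: "vars_g (B \<cdot>\<^sub>p \<pi>2 \<cdot>\<^sub>s \<xi>1) \<subseteq> Vc"
      unfolding Vc_def vars_c_def csubst_def by (simp add: vars_g_gsubst)
    have "B \<cdot>\<^sub>p \<pi>2 \<cdot>\<^sub>s \<xi>1 \<cdot>\<^sub>s \<theta>1 \<cdot>\<^sub>s \<delta> = B \<cdot>\<^sub>p \<pi>2 \<cdot>\<^sub>s \<xi>1 \<cdot>\<^sub>s scomp \<theta>1 \<delta>" by (rule gsubst_comp)
    also have "\<dots> = B \<cdot>\<^sub>p \<pi>2 \<cdot>\<^sub>s \<xi>1 \<cdot>\<^sub>s scomp u \<theta>2"
      by (rule gsubst_cong) (use BV dprop in \<open>auto simp: scomp_def\<close>)
    also have "\<dots> = B \<cdot>\<^sub>p \<pi>2 \<cdot>\<^sub>s \<xi>1 \<cdot>\<^sub>s u \<cdot>\<^sub>s \<theta>2" by (rule gsubst_comp[symmetric])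
    also have "B \<cdot>\<^sub>p \<pi>2 \<cdot>\<^sub>s \<xi>1 \<cdot>\<^sub>s u = B \<cdot>\<^sub>p \<pi>2 \<cdot>\<^sub>s \<xi>2"
      using B_u by (simp only: gsubst_gshift)
    finally show ?thesis .
  qed
  have p2: "B \<cdot>\<^sub>s \<xi>1 \<cdot>\<^sub>p \<pi>1 \<cdot>\<^sub>s \<theta>1 \<cdot>\<^sub>s \<delta> \<cdot>\<^sub>p \<rho>'' = B \<cdot>\<^sub>s \<xi>2 \<cdot>\<^sub>p \<pi>2 \<cdot>\<^sub>s \<theta>2"
  proof -
    have "B \<cdot>\<^sub>p \<pi>1 \<cdot>\<^sub>p \<rho>'' \<cdot>\<^sub>s \<xi>1 \<cdot>\<^sub>s \<theta>1 \<cdot>\<^sub>s \<delta> = B \<cdot>\<^sub>p \<pi>2 \<cdot>\<^sub>s \<xi>2 \<cdot>\<^sub>s \<theta>2"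
      using bc dB by simp
    then show ?thesis by (simp only: gsubst_gshift)
  qed
  have "step_sub s2 F = result s1 \<cdot>\<^sub>s \<delta> \<cdot>\<^sub>p \<rho>''"
    unfolding ss rs gsubst_union gshift_union p1 p2 ..
  then show ?thesis using shr dren unfolding F_def G1_def by blast
qed


lemma prios_empty[simp]: "prios {} = {}" unfolding prios_def by simp

lemma prios_mono: "A \<subseteq> B \<Longrightarrow> prios A \<subseteq> prios B"
  unfolding prios_def by auto

lemma prios_diff: "prios (A - C) \<subseteq> prios A"
  by (rule prios_mono) auto

lemma result_split:
  assumes "valid_step s" "sgoal s = A \<union> B"
  shows "result s = step_sub s A \<union> step_sub s B"
proof -
  have z: "sel (sgoal s) \<in> A \<union> B" using sel_prop[OF valid_stepD(1,2)[OF assms(1)]] assms(2) by auto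
  define Bd where "Bd = snd (sclause s) \<cdot>\<^sub>s sren s \<cdot>\<^sub>p sshift s"
  define z where "z = sel (sgoal s)"
  have e: "(A \<union> B) - {z} \<union> Bd = (A - {z} \<union> (if z \<in> A then Bd else {})) \<union> (B - {z} \<union> (if z \<in> B then Bd else {}))"
    using z z_def by auto
  have "result s = ((A \<union> B) - {z} \<union> Bd) \<cdot>\<^sub>s smgu s"
    unfolding result_def Bd_def z_def assms(2) ..
  also have "\<dots> = step_sub s A \<union> step_sub s B"
    by (simp only: e) (simp add: step_sub_def gsubst_union Bd_def z_def)
  finally show ?thesis .
qed

lemma prios_disj:
  assumes v: "valid_step s" and g: "sgoal s = A \<union> B" and d: "prios A \<inter> prios B = {}"
  shows "prios (step_sub s A) \<inter> prios (step_sub s B) = {}"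
proof -
  define z where "z = sel (sgoal s)"
  define P where "P = prios (snd (sclause s) \<cdot>\<^sub>s sren s \<cdot>\<^sub>p sshift s)"
  have zin: "z \<in> A \<union> B" using sel_prop[OF valid_stepD(1,2)[OF v]] g z_def by auto
  have dP: "P \<inter> prios (sgoal s - {z}) = {}" using valid_stepD(9)[OF v] z_def P_def by auto
  have sA: "prios (step_sub s A) = prios (A - {z}) \<union> (if z \<in> A then P else {})"
    unfolding step_sub_def z_def P_def by (auto simp: gsubst_gshift)
  have sB: "prios (step_sub s B) = prios (B - {z}) \<union> (if z \<in> B then P else {})"
    unfolding step_sub_def z_def P_def by (auto simp: gsubst_gshift)
  have zAB: "z \<in> A \<Longrightarrow> z \<notin> B" using d unfolding prios_def by auto
  have pA: "prios (A - {z}) \<subseteq> prios (sgoal s - {z})" "prios (B - {z}) \<subseteq> prios (sgoal s - {z})"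
    using g by (auto intro!: prios_mono)
  have "prios (A - {z}) \<inter> prios (B - {z}) = {}" using d prios_diff by blast
  then show ?thesis using sA sB zAB zin dP pA by (auto split: if_splits)
qed

lemma main_lemma:
  fixes S :: "('f,'v) step set"
  assumes sis: "sis_rule S"
  shows "chain (F \<union> Y) ds2 R \<Longrightarrow> set ds2 \<subseteq> S \<Longrightarrow> prios F \<inter> prios Y = {} \<Longrightarrow>
    F = Qc \<cdot>\<^sub>s \<sigma> \<cdot>\<^sub>p \<rho> \<Longrightarrow> shifting \<rho> \<Longrightarrow> chain Qc ds1 Q \<Longrightarrow> set ds1 \<subseteq> S \<Longrightarrow>
    subtempl ds2 F = map sclause ds1 \<Longrightarrow>
    \<exists>\<sigma>' \<rho>'. shifting \<rho>' \<and> subres ds2 F = Q \<cdot>\<^sub>s \<sigma>' \<cdot>\<^sub>p \<rho>' \<and>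
      (renaming \<sigma> \<and> subtempl ds2 Y = [] \<longrightarrow> renaming \<sigma>')"
proof (induction ds2 arbitrary: F Y Qc ds1 \<sigma> \<rho>)
  case Nil
  then have "ds1 = []" by simp
  then have "Q = Qc" using Nil by simp
  then show ?case using Nil by auto
next
  case (Cons s2 rest)
  have v2: "valid_step s2" and g2: "sgoal s2 = F \<union> Y" and ch: "chain (result s2) rest R"
    using Cons.prems(1) by auto
  have s2S: "s2 \<in> S" and restS: "set rest \<subseteq> S" using Cons.prems(2) by auto
  define z where "z = sel (sgoal s2)"
  have zin: "z \<in> F \<union> Y" using sel_prop[OF valid_stepD(1,2)[OF v2]] g2 z_def by auto
  have rsplit: "result s2 = step_sub s2 F \<union> step_sub s2 Y" by (rule result_split[OF v2 g2])
  have pd: "prios (step_sub s2 F) \<inter> prios (step_sub s2 Y) = {}" by (rule prios_disj[OF v2 g2 Cons.prems(3)])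
  have ch': "chain (step_sub s2 F \<union> step_sub s2 Y) rest R" using ch rsplit by simp
  show ?case
  proof (cases "z \<in> F")
    case False
    then have zY: "z \<in> Y" using zin by auto
    have sF: "step_sub s2 F = Qc \<cdot>\<^sub>s scomp \<sigma> (smgu s2) \<cdot>\<^sub>p \<rho>"
      unfolding step_sub_def using False Cons.prems(4) z_def
      by (simp add: gsubst_gshift[symmetric] gsubst_comp)
    have st: "subtempl rest (step_sub s2 F) = map sclause ds1"
      using Cons.prems(8) False z_def by simp
    obtain \<sigma>' \<rho>' where IH: "shifting \<rho>'" "subres rest (step_sub s2 F) = Q \<cdot>\<^sub>s \<sigma>' \<cdot>\<^sub>p \<rho>'"
      using Cons.IH[OF ch' restS pd sF Cons.prems(5,6,7) st] by blast
    have "subtempl (s2 # rest) Y \<noteq> []" using zY z_def by simp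
    then show ?thesis using IH by auto
  next
    case True
    then have zY: "z \<notin> Y" using Cons.prems(3) unfolding prios_def by auto
    obtain s1 ds1' where ds1: "ds1 = s1 # ds1'" and cl: "sclause s1 = sclause s2"
      and st: "subtempl rest (step_sub s2 F) = map sclause ds1'"
      using Cons.prems(8) True z_def by (cases ds1) auto
    have v1: "valid_step s1" and gs1: "sgoal s1 = Qc" and ch1: "chain (result s1) ds1' Q"
      using Cons.prems(6) ds1 by auto
    have s1S: "s1 \<in> S" and ds1S: "set ds1' \<subseteq> S" using Cons.prems(7) ds1 by auto
    obtain \<delta> \<rho>' where sl: "shifting \<rho>'" "step_sub s2 (sgoal s1 \<cdot>\<^sub>s \<sigma> \<cdot>\<^sub>p \<rho>) = result s1 \<cdot>\<^sub>s \<delta> \<cdot>\<^sub>p \<rho>'"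
      "renaming \<sigma> \<longrightarrow> renaming \<delta>"
    proof -
      have a1: "sgoal s2 = sgoal s1 \<cdot>\<^sub>s \<sigma> \<cdot>\<^sub>p \<rho> \<union> Y" using g2 Cons.prems(4) gs1 by simp
      have a2: "prios (sgoal s1 \<cdot>\<^sub>s \<sigma> \<cdot>\<^sub>p \<rho>) \<inter> prios Y = {}" using Cons.prems(3,4) gs1 by simp
      have a3: "sel (sgoal s2) \<in> sgoal s1 \<cdot>\<^sub>s \<sigma> \<cdot>\<^sub>p \<rho>" using True z_def Cons.prems(4) gs1 by simp
      show ?thesis using step_lemma[OF sis s1S s2S cl Cons.prems(5) a1 a2 a3] that by blast
    qed
    have sF: "step_sub s2 F = result s1 \<cdot>\<^sub>s \<delta> \<cdot>\<^sub>p \<rho>'" using sl(2) gs1 Cons.prems(4) by simp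
    obtain \<sigma>' \<rho>'' where IH: "shifting \<rho>''" "subres rest (step_sub s2 F) = Q \<cdot>\<^sub>s \<sigma>' \<cdot>\<^sub>p \<rho>''"
      "renaming \<delta> \<and> subtempl rest (step_sub s2 Y) = [] \<longrightarrow> renaming \<sigma>'"
      using Cons.IH[OF ch' restS pd sF sl(1) ch1 ds1S st] by blast
    have "subtempl (s2 # rest) Y = subtempl rest (step_sub s2 Y)" using zY z_def by simp
    then show ?thesis using IH sl(3) by auto
  qed
qed


theorem lemmaL3p1p1:
  fixes S :: "('f,'v) step set"
    and G X Q R :: "('f,'v) pgoal"
    and \<gamma> :: "('f,'v) subst"
    and \<tau> :: "rat \<Rightarrow> rat"
    and ds1 ds2 :: "('f,'v) step list"
    and E D :: "('f,'v) clause list"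
  assumes "infinite (UNIV :: 'v set)"
    and "sis_rule S"
    and "pgoal G" and "pgoal X" and "shifting \<tau>"
    and "prios (G \<cdot>\<^sub>s \<gamma> \<cdot>\<^sub>p \<tau>) \<inter> prios X = {}"
    and "pderiv S G ds1 E Q"
    and "pderiv S (G \<cdot>\<^sub>s \<gamma> \<cdot>\<^sub>p \<tau> \<union> X) ds2 D R"
    and "subtempl ds2 (G \<cdot>\<^sub>s \<gamma> \<cdot>\<^sub>p \<tau>) = E"
  shows "\<exists>\<sigma> \<rho>. shifting \<rho> \<and> subres ds2 (G \<cdot>\<^sub>s \<gamma> \<cdot>\<^sub>p \<tau>) = Q \<cdot>\<^sub>s \<sigma> \<cdot>\<^sub>p \<rho> \<and>
           (renaming \<gamma> \<and> subtempl ds2 X = [] \<longrightarrow> renaming \<sigma>)"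
proof -
  have p1: "chain G ds1 Q" "set ds1 \<subseteq> S" "map sclause ds1 = E" using assms(7) unfolding pderiv_def by auto
  have p2: "chain (G \<cdot>\<^sub>s \<gamma> \<cdot>\<^sub>p \<tau> \<union> X) ds2 R" "set ds2 \<subseteq> S" using assms(8) unfolding pderiv_def by auto
  have st: "subtempl ds2 (G \<cdot>\<^sub>s \<gamma> \<cdot>\<^sub>p \<tau>) = map sclause ds1" using assms(9) p1(3) by simp
  show ?thesis
    using main_lemma[OF assms(2) p2 assms(6) refl assms(5) p1(1,2) st] .
qed

end
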